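(* Let $n\ge 2$ and let $q$ be a prime power, and identify $E_q=\{0,1,\dots,q-1\}$ with the finite field $\mathbb{F}_q$, so that $E_q^n$ is an $n$-dimensional vector space over $\mathbb{F}_q$. Then every linear subspace $L\subseteq E_q^n$ with $|L|>1$ is metrically dense: $R(L)\le R(B)$ for every subset $B\subseteq E_q^n$ that is isometric to $L$.
   Context: $E_q^n$ carries the Hamming distance $d_H(x,y)=|\{i: x_i\neq y_i\}|$. For $A\subseteq E_q^n$, $R(A)$ is the number of coordinates $i$ such that the $i$-th coordinates of the elements of $A$ are not all equal (the number of non-constant columns of the matrix whose rows are the elements of $A$). Two subsets $A,B\subseteq E_q^n$ are isometric if there is a bijection $\phi:A\to B$ with $d_H(\phi(x),\phi(y))=d_H(x,y)$ for all $x,y\in A$. *)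

theory Defs
  imports Main
begin

text \<open>Words of length n over a finite field are modelled as functions
  from a finite index type 'n (with CARD('n) = n) to the field type 'a.\<close>

definition hamming :: "('n::finite \<Rightarrow> 'a) \<Rightarrow> ('n \<Rightarrow> 'a) \<Rightarrow> nat" where
  "hamming x y = card {i. x i \<noteq> y i}"

definition R :: "('n::finite \<Rightarrow> 'a) set \<Rightarrow> nat" where
  "R A = card {i. \<exists>x\<in>A. \<exists>y\<in>A. x i \<noteq> y i}"

definition isometric :: "('n::finite \<Rightarrow> 'a) set \<Rightarrow> ('n \<Rightarrow> 'a) set \<Rightarrow> bool" where
  "isometric A B \<longleftrightarrow> (\<exists>\<phi>. bij_betw \<phi> A B \<and>
      (\<forall>x\<in>A. \<forall>y\<in>A. hamming (\<phi> x) (\<phi> y) = hamming x y))"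

definition lin_subspace :: "('n::finite \<Rightarrow> 'a::field) set \<Rightarrow> bool" where
  "lin_subspace L \<longleftrightarrow> (\<lambda>_. 0) \<in> L \<and>
     (\<forall>x\<in>L. \<forall>y\<in>L. (\<lambda>i. x i + y i) \<in> L) \<and>
     (\<forall>c. \<forall>x\<in>L. (\<lambda>i. c * x i) \<in> L)"

definition metrically_dense :: "('n::finite \<Rightarrow> 'a) set \<Rightarrow> bool" where
  "metrically_dense A \<longleftrightarrow> (\<forall>B. isometric A B \<longrightarrow> R A \<le> R B)"

end

theory Submission
  imports Defs
begin

definition Dc :: "('n::finite \<Rightarrow> 'a) set \<Rightarrow> 'n \<Rightarrow> nat" where
  "Dc A i = card {p \<in> A \<times> A. fst p i \<noteq> snd p i}"

definition cnt :: "('n::finite \<Rightarrow> 'a) set \<Rightarrow> 'n \<Rightarrow> 'a \<Rightarrow> nat" where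
  "cnt A i a = card {x \<in> A. x i = a}"

lemma hamming_sum:
  fixes x y :: "'n::finite \<Rightarrow> 'a"
  shows "hamming x y = (\<Sum>i\<in>UNIV. if x i \<noteq> y i then 1 else 0)"
  unfolding hamming_def by (simp add: sum.If_cases)

lemma Dc_sum:
  fixes A :: "('n::finite \<Rightarrow> 'a::finite) set"
  shows "Dc A i = (\<Sum>p\<in>A \<times> A. if fst p i \<noteq> snd p i then 1 else 0)"
  unfolding Dc_def by (simp add: sum.If_cases Int_def conj_commute)

lemma sum_hamming:
  fixes A :: "('n::finite \<Rightarrow> 'a::finite) set"
  shows "(\<Sum>p\<in>A \<times> A. hamming (fst p) (snd p)) = (\<Sum>i\<in>UNIV. Dc A i)"
  unfolding hamming_sum Dc_sum by (rule sum.swap)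

lemma cnt_sum:
  fixes A :: "('n::finite \<Rightarrow> 'a::finite) set"
  shows "(\<Sum>a\<in>UNIV. cnt A i a) = card A"
proof -
  have "(\<Sum>a\<in>UNIV. sum (\<lambda>_. 1::nat) {x. x \<in> A \<and> x i = a}) = sum (\<lambda>_. 1) A"
    by (rule sum.group) auto
  then show ?thesis unfolding cnt_def by simp
qed

lemma Dc_eq:
  fixes A :: "('n::finite \<Rightarrow> 'a::finite) set"
  shows "Dc A i + (\<Sum>a\<in>UNIV. cnt A i a ^ 2) = card A ^ 2"
proof -
  let ?E = "{p \<in> A \<times> A. fst p i = snd p i}"
  let ?D = "{p \<in> A \<times> A. fst p i \<noteq> snd p i}"
  have un: "A \<times> A = ?D \<union> ?E" by auto
  have "card (A \<times> A) = card ?D + card ?E"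
    by (subst un, rule card_Un_disjoint) auto
  moreover have "?E = (\<Union>a\<in>UNIV. {x \<in> A. x i = a} \<times> {x \<in> A. x i = a})" by auto
  moreover have "card (\<Union>a\<in>UNIV. {x \<in> A. x i = a} \<times> {x \<in> A. x i = a})
      = (\<Sum>a\<in>UNIV. card ({x \<in> A. x i = a} \<times> {x \<in> A. x i = a}))"
    by (rule card_UN_disjoint) auto
  ultimately show ?thesis unfolding Dc_def cnt_def
    by (simp add: card_cartesian_product power2_eq_square)
qed

lemma cauchy:
  fixes f :: "'a::finite \<Rightarrow> nat"
  shows "(\<Sum>a\<in>UNIV. f a) ^ 2 \<le> card (UNIV::'a set) * (\<Sum>a\<in>UNIV. f a ^ 2)"
proof -
  define q where "q = int (card (UNIV::'a set))"
  define m where "m = (\<Sum>a\<in>UNIV. int (f a))"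
  define s where "s = (\<Sum>a\<in>UNIV. int (f a) ^ 2)"
  have q0: "q > 0" unfolding q_def by (simp add: finite_UNIV_card_ge_0)
  have "0 \<le> (\<Sum>a\<in>UNIV. (q * int (f a) - m) ^ 2)" by (rule sum_nonneg) simp
  also have "(\<Sum>a\<in>UNIV. (q * int (f a) - m) ^ 2)
      = (\<Sum>a\<in>UNIV. q^2 * int (f a) ^ 2 - 2 * q * m * int (f a) + m^2)"
    by (rule sum.cong) (auto simp: power2_eq_square algebra_simps)
  also have "\<dots> = (\<Sum>a\<in>UNIV. q^2 * int (f a) ^ 2) - (\<Sum>a\<in>UNIV. 2 * q * m * int (f a)) + (\<Sum>a\<in>(UNIV::'a set). m^2)"
    by (simp add: sum.distrib sum_subtractf)
  also have "\<dots> = q^2 * s - 2 * q * m * m + q * m^2"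
    unfolding s_def m_def q_def by (simp only: sum_distrib_left[symmetric] sum_constant)
  also have "\<dots> = q * (q * s - m^2)" by (simp add: power2_eq_square algebra_simps)
  finally have "0 \<le> q * s - m^2" using q0 by (simp add: zero_le_mult_iff)
  then have "m^2 \<le> q * s" by simp
  then have "int ((\<Sum>a\<in>UNIV. f a) ^ 2) \<le> int (card (UNIV::'a set) * (\<Sum>a\<in>UNIV. f a ^ 2))"
    unfolding m_def s_def q_def by simp
  then show ?thesis by linarith
qed

lemma card_field_ge2: "card (UNIV::'a::{finite,field} set) \<ge> 2"
proof -
  have "{0::'a, 1} \<subseteq> UNIV" by simp
  then have "card {0::'a, 1} \<le> card (UNIV::'a set)" by (rule card_mono[OF finite_UNIV])
  then show ?thesis by simp
qed

lemma Dc_bound: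
  fixes A :: "('n::finite \<Rightarrow> 'a::finite) set"
  shows "card (UNIV::'a set) * Dc A i \<le> (card (UNIV::'a set) - 1) * card A ^ 2"
proof -
  let ?q = "card (UNIV::'a set)"
  have e: "Dc A i + (\<Sum>a\<in>UNIV. cnt A i a ^ 2) = card A ^ 2" by (rule Dc_eq)
  have c: "card A ^ 2 \<le> ?q * (\<Sum>a\<in>UNIV. cnt A i a ^ 2)"
    using cauchy[of "cnt A i"] cnt_sum[of A i] by simp
  have "?q * Dc A i + ?q * (\<Sum>a\<in>UNIV. cnt A i a ^ 2) = ?q * card A ^ 2"
    using e by (metis add_mult_distrib2)
  then have "?q * Dc A i + card A ^ 2 \<le> ?q * card A ^ 2" using c by linarith
  then show ?thesis by (simp add: diff_mult_distrib)
qed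

lemma Dc_zero:
  fixes A :: "('n::finite \<Rightarrow> 'a::finite) set"
  assumes "i \<notin> {i. \<exists>x\<in>A. \<exists>y\<in>A. x i \<noteq> y i}"
  shows "Dc A i = 0"
  using assms unfolding Dc_def by (auto simp: card_eq_0_iff)

lemma cnt_le:
  fixes L :: "('n::finite \<Rightarrow> 'a::{finite,field}) set"
  assumes L: "lin_subspace L" and v: "v \<in> L" "v i \<noteq> 0"
  shows "cnt L i a \<le> cnt L i b"
proof -
  define c where "c = (b - a) / v i"
  let ?f = "\<lambda>x. \<lambda>j. x j + c * v j"
  have "inj_on ?f {x \<in> L. x i = a}"
    by (auto simp: inj_on_def fun_eq_iff)
  moreover have "?f ` {x \<in> L. x i = a} \<subseteq> {x \<in> L. x i = b}"
  proof
    fix y assume "y \<in> ?f ` {x \<in> L. x i = a}"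
    then obtain x where x: "x \<in> L" "x i = a" "y = ?f x" by auto
    have "(\<lambda>j. c * v j) \<in> L" using L v unfolding lin_subspace_def by blast
    then have "y \<in> L" using L x unfolding lin_subspace_def by auto
    moreover have "y i = b" using x v unfolding c_def by simp
    ultimately show "y \<in> {x \<in> L. x i = b}" by simp
  qed
  ultimately show ?thesis unfolding cnt_def by (rule card_inj_on_le) simp
qed

lemma Dc_L:
  fixes L :: "('n::finite \<Rightarrow> 'a::{finite,field}) set"
  assumes L: "lin_subspace L" and v: "v \<in> L" "v i \<noteq> 0"
  shows "card (UNIV::'a set) * Dc L i = (card (UNIV::'a set) - 1) * card L ^ 2"
proof -
  let ?q = "card (UNIV::'a set)"
  define n where "n = cnt L i 0"
  have all: "cnt L i a = n" for a
    unfolding n_def using cnt_le[OF L v] by (meson le_antisym)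
  have qn: "?q * n = card L" using cnt_sum[of L i] all by simp
  have e: "Dc L i + ?q * n^2 = card L ^ 2" using Dc_eq[of L i] all by simp
  have "?q * Dc L i + ?q * (?q * n^2) = ?q * card L ^ 2"
    using e by (metis add_mult_distrib2)
  moreover have "?q * (?q * n^2) = card L ^ 2" using qn by (simp add: power2_eq_square algebra_simps)
  ultimately have "?q * Dc L i + card L ^ 2 = ?q * card L ^ 2" by simp
  then show ?thesis by (simp add: diff_mult_distrib)
qed

theorem mainTheorem3:
  fixes L :: "('n::finite \<Rightarrow> 'a::{finite,field}) set"
  assumes "card (UNIV :: 'n set) \<ge> 2"
    and "lin_subspace L"
    and "card L > 1"
  shows "metrically_dense L"
  unfolding metrically_dense_def
proof (intro allI impI)
  fix B assume "isometric L B"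
  then obtain \<phi> where bij: "bij_betw \<phi> L B"
    and iso: "\<forall>x\<in>L. \<forall>y\<in>L. hamming (\<phi> x) (\<phi> y) = hamming x y"
    unfolding isometric_def by blast
  let ?q = "card (UNIV::'a set)"
  let ?m = "card L"
  have cB: "card B = ?m" using bij by (simp add: bij_betw_same_card)
  have L: "lin_subspace L" using assms(2) .
  have z: "(\<lambda>_. 0) \<in> L" using L unfolding lin_subspace_def by blast
  let ?NL = "{i. \<exists>x\<in>L. \<exists>y\<in>L. x i \<noteq> y i}"
  let ?NB = "{i. \<exists>x\<in>B. \<exists>y\<in>B. x i \<noteq> y i}"
  have sumeq: "(\<Sum>i\<in>UNIV. Dc L i) = (\<Sum>i\<in>UNIV. Dc B i)"
  proof -
    have bp: "bij_betw (map_prod \<phi> \<phi>) (L \<times> L) (B \<times> B)"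
      by (rule bij_betw_map_prod[OF bij bij])
    have "(\<Sum>p\<in>B \<times> B. hamming (fst p) (snd p))
        = (\<Sum>p\<in>L \<times> L. hamming (fst (map_prod \<phi> \<phi> p)) (snd (map_prod \<phi> \<phi> p)))"
      by (rule sum.reindex_bij_betw[OF bp, symmetric])
    also have "\<dots> = (\<Sum>p\<in>L \<times> L. hamming (fst p) (snd p))"
      by (rule sum.cong) (auto simp: iso)
    finally show ?thesis using sum_hamming[of L] sum_hamming[of B] by simp
  qed
  have hL: "?q * Dc L i = (if i \<in> ?NL then (?q - 1) * ?m^2 else 0)" for i
  proof (cases "i \<in> ?NL")
    case True
    then obtain x y where xy: "x \<in> L" "y \<in> L" "x i \<noteq> y i" by auto
    then have "x i \<noteq> 0 \<or> y i \<noteq> 0" by auto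
    then obtain v where "v \<in> L" "v i \<noteq> 0" using xy by blast
    then show ?thesis using Dc_L[OF L] True by simp
  next
    case False
    then show ?thesis using Dc_zero[OF False] by simp
  qed
  have hB: "?q * Dc B i \<le> (if i \<in> ?NB then (?q - 1) * ?m^2 else 0)" for i
  proof (cases "i \<in> ?NB")
    case True
    then show ?thesis using Dc_bound[of B i] cB by simp
  next
    case False
    then show ?thesis using Dc_zero[OF False] by simp
  qed
  have "(?q - 1) * ?m^2 * R L = (\<Sum>i\<in>UNIV. ?q * Dc L i)"
    unfolding R_def using hL by (simp add: sum.If_cases Int_def)
  also have "\<dots> = (\<Sum>i\<in>UNIV. ?q * Dc B i)" using sumeq by (simp add: sum_distrib_left[symmetric])
  also have "\<dots> \<le> (\<Sum>i\<in>UNIV. (if i \<in> ?NB then (?q - 1) * ?m^2 else 0))"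
    by (rule sum_mono) (rule hB)
  also have "\<dots> = (?q - 1) * ?m^2 * R B"
    unfolding R_def by (simp add: sum.If_cases Int_def)
  finally have "(?q - 1) * ?m^2 * R L \<le> (?q - 1) * ?m^2 * R B" .
  moreover have "(?q - 1) * ?m^2 > 0" using card_field_ge2[where 'a='a] assms(3) by simp
  ultimately show "R L \<le> R B" by simp
qed

end
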